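(* Under the assumptions of the explicit-formulae proposition (piecewise linear concave non-positive increasing $v$ on grid $x_1<\dots<x_N$, $-\infty$ below $x_1$ and constant above $x_N$; $u$ concave increasing with $u^\dagger$ continuous on $(0,\infty)$ and $\lim_{p\to0}u^\dagger(p)=\infty$; $s\in(0,1)$), $\lim_{\eta\to\infty}\gamma^\eta=\gamma_{\min}$.
   Context: $\gamma_{\min}=\inf\{x:u(x)>-\infty\}$. $\Phi$ is the standard normal distribution function, $M=|\mu-r|\sqrt{\delta t}/\sigma$, $Q(x)=\Phi(M+\Phi^{-1}(x))$, $q^A_{BS}=Q'$. For concave increasing $g$, $g^\dagger(p)=\inf\{x:p\in\partial g(x)\}$, $\partial g$ the superdifferential. $C\in\{0,1\}$. For $\eta>0$: $f^\eta(x)=v^\dagger(\eta s^{C-1}e^{-r\delta t}q^A_{BS}(x))$, $\gamma^\eta=u^\dagger\big(-\frac{\eta}{\delta t}\big(-1+s\int_0^1(1+v(f^\eta(x)))\mathrm dx\big)^{-1}\big)$. *)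

theory Defs
  imports "HOL-Probability.Probability"
begin

definition Phi :: "real \<Rightarrow> real" where
  "Phi x = (LBINT t:{..x}. std_normal_density t)"

definition Phi_inv :: "real \<Rightarrow> real" where
  "Phi_inv p = (THE x. Phi x = p)"

definition M_param :: "real \<Rightarrow> real \<Rightarrow> real \<Rightarrow> real \<Rightarrow> real" where
  "M_param \<mu> r \<sigma> \<delta>t = \<bar>\<mu> - r\<bar> * sqrt \<delta>t / \<sigma>"

definition Q_fun :: "real \<Rightarrow> real \<Rightarrow> real" where
  "Q_fun M x = Phi (M + Phi_inv x)"

definition qBS :: "real \<Rightarrow> real \<Rightarrow> real" where
  "qBS M x = deriv (Q_fun M) x"

definition concave_ereal :: "(real \<Rightarrow> ereal) \<Rightarrow> bool" where
  "concave_ereal g \<longleftrightarrow> (\<forall>x y t. 0 < t \<and> t < 1 \<longrightarrow>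
      ereal t * g x + ereal (1 - t) * g y \<le> g (t * x + (1 - t) * y))"

definition superdiff :: "(real \<Rightarrow> ereal) \<Rightarrow> real \<Rightarrow> real set" where
  "superdiff g x = {p. \<bar>g x\<bar> \<noteq> \<infinity> \<and> (\<forall>y. g y \<le> g x + ereal (p * (y - x)))}"

definition dagger :: "(real \<Rightarrow> ereal) \<Rightarrow> real \<Rightarrow> ereal" where
  "dagger g p = Inf (ereal ` {x. p \<in> superdiff g x})"

definition gamma_min :: "(real \<Rightarrow> ereal) \<Rightarrow> ereal" where
  "gamma_min u = Inf (ereal ` {x. u x > -\<infinity>})"

definition f_eta :: "(real \<Rightarrow> ereal) \<Rightarrow> real \<Rightarrow> real \<Rightarrow> real \<Rightarrow> real \<Rightarrow> real \<Rightarrow> real \<Rightarrow> real \<Rightarrow> real \<Rightarrow> real" where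
  "f_eta v \<mu> r \<sigma> \<delta>t s C \<eta> x =
     real_of_ereal (dagger v (\<eta> * s powr (C - 1) * exp (- r * \<delta>t) * qBS (M_param \<mu> r \<sigma> \<delta>t) x))"

definition gamma_eta :: "(real \<Rightarrow> ereal) \<Rightarrow> (real \<Rightarrow> ereal) \<Rightarrow> real \<Rightarrow> real \<Rightarrow> real \<Rightarrow> real \<Rightarrow> real \<Rightarrow> real \<Rightarrow> real \<Rightarrow> ereal" where
  "gamma_eta u v \<mu> r \<sigma> \<delta>t s C \<eta> =
     dagger u (- (\<eta> / \<delta>t) * inverse (-1 + s * integral {0..1}
        (\<lambda>x. 1 + real_of_ereal (v (f_eta v \<mu> r \<sigma> \<delta>t s C \<eta> x)))))"

end

theory Submission imports Defs begin
lemma S_fin: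
  assumes "p \<in> superdiff u x" shows "u x = ereal (real_of_ereal (u x))"
  using assms unfolding superdiff_def by (cases "u x") auto

lemma S_ineq:
  assumes "p \<in> superdiff u x" shows "u y \<le> u x + ereal (p * (y - x))"
  using assms unfolding superdiff_def by auto

lemma S_nonempty:
  assumes "\<bar>dagger u p\<bar> \<noteq> \<infinity>" shows "\<exists>x. p \<in> superdiff u x"
proof (rule ccontr)
  assume "\<not> ?thesis"
  then have "{x. p \<in> superdiff u x} = {}" by auto
  then have "dagger u p = \<infinity>" unfolding dagger_def by (simp add: top_ereal_def)
  with assms show False by simp
qed

lemma S_order:
  assumes "p \<in> superdiff u x" "q \<in> superdiff u z" "q < p"
  shows "x \<le> z"
proof (rule ccontr)
  assume "\<not> x \<le> z"
  define a where "a = real_of_ereal (u x)"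
  define b where "b = real_of_ereal (u z)"
  have ax: "u x = ereal a" using S_fin[OF assms(1)] a_def by simp
  have bz: "u z = ereal b" using S_fin[OF assms(2)] b_def by simp
  have "u z \<le> u x + ereal (p * (z - x))" by (rule S_ineq[OF assms(1)])
  then have 1: "b \<le> a + p * (z - x)" using ax bz by simp
  have "u x \<le> u z + ereal (q * (x - z))" by (rule S_ineq[OF assms(2)])
  then have 2: "a \<le> b + q * (x - z)" using ax bz by simp
  from 1 2 have "0 \<le> (p - q) * (z - x)" by (simp add: algebra_simps)
  moreover have "(p - q) * (z - x) < 0" using \<open>\<not> x \<le> z\<close> assms(3)
    by (simp add: mult_pos_neg)
  ultimately show False by simp
qed

lemma dagger_ge: "gamma_min u \<le> dagger u p" if ult: "\<And>x. u x < \<infinity>"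
  unfolding dagger_def gamma_min_def
proof (rule Inf_superset_mono, rule image_mono, rule subsetI)
  fix x assume "x \<in> {x. p \<in> superdiff u x}"
  then have "\<bar>u x\<bar> \<noteq> \<infinity>" unfolding superdiff_def by auto
  then show "x \<in> {x. - \<infinity> < u x}" by (cases "u x") auto
qed

lemma dagger_lim:
  assumes ult: "\<And>x. u x < \<infinity>" and fin: "\<And>p. p > 0 \<Longrightarrow> \<bar>dagger u p\<bar> \<noteq> \<infinity>"
    and mono: "mono u"
  shows "(dagger u \<longlongrightarrow> gamma_min u) at_top"
proof (rule order_tendstoI)
  fix a assume "a < gamma_min u"
  have dg: "\<And>p. gamma_min u \<le> dagger u p" by (rule dagger_ge) (rule ult)
  show "eventually (\<lambda>p. a < dagger u p) at_top"
    using \<open>a < gamma_min u\<close> dg by (intro always_eventually allI) (blast intro: less_le_trans)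
next
  fix c assume c: "gamma_min u < c"
  obtain z where z: "1 \<in> superdiff u z" using S_nonempty[OF fin[of 1]] by auto
  show "eventually (\<lambda>p. dagger u p < c) at_top"
  proof (cases c)
    case PInf
    show ?thesis unfolding PInf
    proof (intro eventually_at_top_linorderI[of 1])
      fix p :: real assume "1 \<le> p"
      then have "\<bar>dagger u p\<bar> \<noteq> \<infinity>" using fin by simp
      then show "dagger u p < \<infinity>" by (cases "dagger u p") auto
    qed
  next
    case MInf
    with c show ?thesis by simp
  next
    case (real c0)
    have "Inf (ereal ` {x. u x > -\<infinity>}) < ereal c0" using c real gamma_min_def by simp
    then obtain y where y: "u y > -\<infinity>" "y < c0"
      by (auto simp: Inf_less_iff)
    define m where "m = min y z"
    have zfin: "u z = ereal (real_of_ereal (u z))" by (rule S_fin[OF z])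
    have mD: "u m > -\<infinity>"
    proof (cases "y \<le> z")
      case True then show ?thesis using y m_def by simp
    next
      case False then have "m = z" using m_def by simp
      then show ?thesis using zfin by (metis MInfty_neq_ereal(1) ereal_infty_less(2))
    qed
    have mfin: "u m = ereal (real_of_ereal (u m))" using mD ult[of m]
      by (cases "u m") auto
    have mc: "m < c0" using y m_def by simp
    define K where "K = max 1 ((real_of_ereal (u z) - real_of_ereal (u m)) / (c0 - m))"
    show ?thesis
    proof (rule eventually_at_top_linorderI[of "K + 1"])
      fix p assume p: "p \<ge> K + 1"
      have p1: "p > 1" using p K_def by simp
      obtain x where x: "p \<in> superdiff u x" using S_nonempty[OF fin[of p]] p1 by auto
      have xz: "x \<le> z" by (rule S_order[OF x z p1])
      have "x < c0"
      proof (rule ccontr)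
        assume "\<not> x < c0"
        have "u m \<le> u x + ereal (p * (m - x))" by (rule S_ineq[OF x])
        also have "u x \<le> u z" using mono xz by (auto dest: monoD)
        then have "u x + ereal (p * (m - x)) \<le> u z + ereal (p * (m - x))"
          by (intro add_right_mono)
        finally have "real_of_ereal (u m) \<le> real_of_ereal (u z) + p * (m - x)"
          using zfin mfin by (metis plus_ereal.simps(1) ereal_less_eq(3))
        moreover have "p * (m - x) \<le> p * (m - c0)" using \<open>\<not> x < c0\<close> p1 by simp
        ultimately have "p * (c0 - m) \<le> real_of_ereal (u z) - real_of_ereal (u m)"
          by (simp add: algebra_simps)
        then have "p \<le> (real_of_ereal (u z) - real_of_ereal (u m)) / (c0 - m)"
          using mc by (simp add: pos_le_divide_eq)
        then show False using p K_def by simp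
      qed
      have "dagger u p \<le> ereal x" unfolding dagger_def using x by (auto intro: Inf_lower)
      then show "dagger u p < c" using \<open>x < c0\<close> real
        by (metis ereal_less_eq(3) le_less_trans less_le_not_le)
    qed
  qed
qed

lemma integrand_bounds:
  fixes v :: "real \<Rightarrow> ereal"
  assumes v_below: "\<And>x. x < a \<Longrightarrow> v x = -\<infinity>"
    and v_fin: "v a \<noteq> -\<infinity>" and v_nonpos: "\<And>x. v x \<le> 0" and v_mono: "mono v"
  shows "min 0 (real_of_ereal (v a)) \<le> real_of_ereal (v w) \<and> real_of_ereal (v w) \<le> 0"
proof (cases "v w = -\<infinity>")
  case True then show ?thesis by simp
next
  case False
  then have "a \<le> w" using v_below by force
  then have le: "v a \<le> v w" using v_mono by (auto dest: monoD)
  have fa: "\<bar>v a\<bar> \<noteq> \<infinity>" using v_fin v_nonpos[of a] by (cases "v a") auto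
  have fw: "\<bar>v w\<bar> \<noteq> \<infinity>" using False v_nonpos[of w] by (cases "v w") auto
  show ?thesis using le fa fw v_nonpos[of w]
    by (cases "v a"; cases "v w") auto
qed

lemma integral_bounds:
  fixes g :: "real \<Rightarrow> real"
  assumes "\<And>x. lo \<le> g x" "\<And>x. g x \<le> 1"
  shows "min 0 lo \<le> integral {0..1} g \<and> integral {0..1} g \<le> 1"
proof (cases "g integrable_on {0..1}")
  case True
  have "integral {0..1} (\<lambda>x::real. lo) \<le> integral {0..1} g"
    using True assms by (intro Henstock_Kurzweil_Integration.integral_le) auto
  moreover have "integral {0..1} g \<le> integral {0..1} (\<lambda>x::real. 1)"
    using True assms by (intro Henstock_Kurzweil_Integration.integral_le) auto
  ultimately show ?thesis by simp
next
  case False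
  then show ?thesis by (simp add: not_integrable_integral)
qed

theorem mainTheorem10:
  fixes u v :: "real \<Rightarrow> ereal" and xs :: "nat \<Rightarrow> real" and N :: nat
    and \<mu> r \<sigma> \<delta>t s C :: real
  assumes N: "N \<ge> 1"
    and grid: "\<And>i. 1 \<le> i \<Longrightarrow> i < N \<Longrightarrow> xs i < xs (i + 1)"
    and v_below: "\<And>x. x < xs 1 \<Longrightarrow> v x = -\<infinity>"
    and v_fin: "\<And>x. xs 1 \<le> x \<Longrightarrow> v x \<noteq> -\<infinity>"
    and v_nonpos: "\<And>x. v x \<le> 0"
    and v_above: "\<And>x. xs N \<le> x \<Longrightarrow> v x = v (xs N)"
    and v_lin: "\<And>i x. 1 \<le> i \<Longrightarrow> i < N \<Longrightarrow> xs i \<le> x \<Longrightarrow> x \<le> xs (i + 1) \<Longrightarrow>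
        v x = v (xs i) + ereal ((x - xs i) / (xs (i + 1) - xs i)) * (v (xs (i + 1)) - v (xs i))"
    and v_conc: "concave_ereal v"
    and v_mono: "mono v"
    and u_conc: "concave_ereal u"
    and u_mono: "mono u"
    and u_lt: "\<And>x. u x < \<infinity>"
    and u_dag_fin: "\<And>p. p > 0 \<Longrightarrow> \<bar>dagger u p\<bar> \<noteq> \<infinity>"
    and u_dag_cont: "continuous_on {0<..} (dagger u)"
    and u_dag_lim: "(dagger u \<longlongrightarrow> \<infinity>) (at_right 0)"
    and s: "0 < s" "s < 1"
    and params: "\<sigma> > 0" "\<delta>t > 0"
    and C: "C \<in> {0, 1}"
  shows "((\<lambda>\<eta>. gamma_eta u v \<mu> r \<sigma> \<delta>t s C \<eta>) \<longlongrightarrow> gamma_min u) at_top"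
proof -
  define I where "I \<eta> = integral {0..1}
        (\<lambda>x. 1 + real_of_ereal (v (f_eta v \<mu> r \<sigma> \<delta>t s C \<eta> x)))" for \<eta>
  define lo where "lo = min 0 (1 + min 0 (real_of_ereal (v (xs 1))))"
  have Ib: "lo \<le> I \<eta> \<and> I \<eta> \<le> 1" for \<eta>
  proof -
    have "min 0 (1 + min 0 (real_of_ereal (v (xs 1)))) \<le> I \<eta> \<and> I \<eta> \<le> 1"
      unfolding I_def
    proof (rule integral_bounds[where lo="1 + min 0 (real_of_ereal (v (xs 1)))"])
      fix x
      have hb: "min 0 (real_of_ereal (v (xs 1))) \<le> real_of_ereal (v (f_eta v \<mu> r \<sigma> \<delta>t s C \<eta> x))
        \<and> real_of_ereal (v (f_eta v \<mu> r \<sigma> \<delta>t s C \<eta> x)) \<le> 0"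
        by (rule integrand_bounds[of "xs 1" v, OF v_below v_fin[OF order_refl] v_nonpos v_mono])
      then show "1 + min 0 (real_of_ereal (v (xs 1))) \<le> 1 + real_of_ereal (v (f_eta v \<mu> r \<sigma> \<delta>t s C \<eta> x))"
        by linarith
      from hb show "1 + real_of_ereal (v (f_eta v \<mu> r \<sigma> \<delta>t s C \<eta> x)) \<le> 1"
        by linarith
    qed
    then show ?thesis unfolding lo_def .
  qed
  define P where "P \<eta> = - (\<eta> / \<delta>t) * inverse (-1 + s * I \<eta>)" for \<eta>
  define K where "K = 1 - s * lo"
  have lo0: "lo \<le> 0" unfolding lo_def by simp
  have K0: "K > 0" unfolding K_def using s lo0 by (smt (verit) mult_nonneg_nonpos)
  have Pge: "\<eta> * inverse (\<delta>t * K) \<le> P \<eta>" if "\<eta> \<ge> 0" for \<eta>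
  proof -
    have d1: "0 < 1 - s * I \<eta>" using Ib[of \<eta>] s by (smt (verit) mult_left_le mult_less_cancel_left_pos)
    have d2: "1 - s * I \<eta> \<le> K" unfolding K_def using Ib[of \<eta>] s by (simp add: mult_left_mono)
    have "P \<eta> = \<eta> / (\<delta>t * (1 - s * I \<eta>))" unfolding P_def
      by (simp add: field_simps inverse_eq_divide) (smt (verit) d1 divide_minus_right)
    also have "\<dots> \<ge> \<eta> / (\<delta>t * K)"
      using that d1 d2 params by (intro divide_left_mono mult_left_mono mult_pos_pos) auto
    finally show ?thesis by (simp add: divide_inverse)
  qed
  have Plim: "filterlim P at_top at_top"
  proof (rule filterlim_at_top_mono)
    show "LIM \<eta> at_top. \<eta> * inverse (\<delta>t * K) :> at_top"
      using K0 params
      by (intro filterlim_at_top_mult_tendsto_pos[OF tendsto_const] filterlim_ident) auto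
    show "\<forall>\<^sub>F \<eta> in at_top. \<eta> * inverse (\<delta>t * K) \<le> P \<eta>"
      by (intro eventually_at_top_linorderI[of 0]) (rule Pge)
  qed
  have "((\<lambda>\<eta>. dagger u (P \<eta>)) \<longlongrightarrow> gamma_min u) at_top"
    by (rule filterlim_compose[OF dagger_lim[OF u_lt u_dag_fin u_mono] Plim])
  moreover have "gamma_eta u v \<mu> r \<sigma> \<delta>t s C \<eta> = dagger u (P \<eta>)" for \<eta>
    unfolding gamma_eta_def P_def I_def ..
  ultimately show ?thesis by simp
qed
end
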